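(* Let $\mathcal{X}\subseteq\mathbb{R}^n$ and let $h = p_k \circ \dots \circ p_1:\mathbb{R}^n \to \mathcal{Y}$ be a model, where each layer $p_r:\mathbb{R}^{n^{r-1}}\to\mathbb{R}^{n^r}$ ($n^0=n$). Let $g:\mathbb{R}^n\times\mathcal{Y} \to G$ be an explanation function (EF). For $m\in\{1,\dots,k\}$ write $f_m := p_m \circ \dots \circ p_1$. Suppose that for some $i \in \{1,\dots,k\}$, $f_i$ is a $\gamma(\epsilon)$-explainable representation with respect to $g$, for a function $\gamma:(0,\infty)\to(0,\infty)$. Let $j$ with $1\le j\le i$, and assume that $p_r$ is an $l_r$-Lipschitz function for every $r \in \{j+1,\dots,i\}$. Then $f_j$ is $\hat{\gamma}(\epsilon)$-explainable with respect to $g$, where $\hat{\gamma}(\epsilon) := \gamma\left(\epsilon \cdot \prod^{i}_{r=j+1} l_r \right)$.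
   Context: $G$ is a set of explanations equipped with a norm (or distance) written $|\cdot|$; the spaces $\mathbb{R}^{d}$ are also equipped with a norm $|\cdot|$, and Lipschitz continuity is with respect to these norms. For a model $h=c\circ f$ with representation $f:\mathcal{X}\to\mathbb{R}^d$ and an EF $g$, $f$ is called a $\gamma(\epsilon)$-explainable representation with respect to $g$ if for every $\epsilon\in(0,\infty)$ and all $x_1,x_2\in\mathcal{X}$: $|f(x_1)-f(x_2)|\le\epsilon$ implies $|g(x_1,h(x_1))-g(x_2,h(x_2))|\le\gamma(\epsilon)$. For the layered model, $f_m$ is regarded as the representation with $c=p_k\circ\dots\circ p_{m+1}$. *)

theory Defs
  imports "HOL-Analysis.Analysis"
begin

text \<open>Vectors of R^d are represented as functions nat => real vanishing outside
  the indices 0..d-1 (dimensions vary along the layers, so type-indexed vectors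
  cannot be used).\<close>
definition Vec :: "nat \<Rightarrow> (nat \<Rightarrow> real) set" where
  "Vec d = {x. \<forall>q\<ge>d. x q = 0}"

definition norm_on :: "nat \<Rightarrow> ((nat \<Rightarrow> real) \<Rightarrow> real) \<Rightarrow> bool" where
  "norm_on d N \<longleftrightarrow>
     (\<forall>x\<in>Vec d. 0 \<le> N x \<and> (N x = 0 \<longleftrightarrow> x = (\<lambda>q. 0))) \<and>
     (\<forall>x\<in>Vec d. \<forall>c. N (\<lambda>q. c * x q) = \<bar>c\<bar> * N x) \<and>
     (\<forall>x\<in>Vec d. \<forall>y\<in>Vec d. N (\<lambda>q. x q + y q) \<le> N x + N y)"

primrec layer_comp :: "(nat \<Rightarrow> (nat \<Rightarrow> real) \<Rightarrow> (nat \<Rightarrow> real)) \<Rightarrow> nat \<Rightarrow> (nat \<Rightarrow> real) \<Rightarrow> (nat \<Rightarrow> real)" where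
  "layer_comp p 0 = id"
| "layer_comp p (Suc m) = p (Suc m) \<circ> layer_comp p m"

definition lipschitz_wrt ::
  "(nat \<Rightarrow> real) set \<Rightarrow> ((nat \<Rightarrow> real) \<Rightarrow> real) \<Rightarrow> ((nat \<Rightarrow> real) \<Rightarrow> real) \<Rightarrow> real
    \<Rightarrow> ((nat \<Rightarrow> real) \<Rightarrow> (nat \<Rightarrow> real)) \<Rightarrow> bool" where
  "lipschitz_wrt D N1 N2 l q \<longleftrightarrow> (\<forall>x\<in>D. \<forall>y\<in>D. N2 (\<lambda>t. q x t - q y t) \<le> l * N1 (\<lambda>t. x t - y t))"

definition explainable_rep ::
  "(nat \<Rightarrow> real) set \<Rightarrow> ((nat \<Rightarrow> real) \<Rightarrow> real) \<Rightarrow> ((nat \<Rightarrow> real) \<Rightarrow> (nat \<Rightarrow> real))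
    \<Rightarrow> ((nat \<Rightarrow> real) \<Rightarrow> (nat \<Rightarrow> real) \<Rightarrow> 'g::metric_space)
    \<Rightarrow> ((nat \<Rightarrow> real) \<Rightarrow> (nat \<Rightarrow> real)) \<Rightarrow> (real \<Rightarrow> real) \<Rightarrow> bool" where
  "explainable_rep X N f g h \<gamma> \<longleftrightarrow>
     (\<forall>\<epsilon>>0. \<forall>x1\<in>X. \<forall>x2\<in>X. N (\<lambda>t. f x1 t - f x2 t) \<le> \<epsilon> \<longrightarrow>
        dist (g x1 (h x1)) (g x2 (h x2)) \<le> \<gamma> \<epsilon>)"

end

theory Submission
  imports Defs
begin

theorem theorem2:
  fixes X :: "(nat \<Rightarrow> real) set" and n k i j :: nat and nd :: "nat \<Rightarrow> nat"
    and p :: "nat \<Rightarrow> (nat \<Rightarrow> real) \<Rightarrow> (nat \<Rightarrow> real)"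
    and nrm :: "nat \<Rightarrow> (nat \<Rightarrow> real) \<Rightarrow> real"
    and g :: "(nat \<Rightarrow> real) \<Rightarrow> (nat \<Rightarrow> real) \<Rightarrow> 'g::metric_space"
    and \<gamma> :: "real \<Rightarrow> real" and l :: "nat \<Rightarrow> real"
  assumes norms: "\<forall>d. norm_on d (nrm d)"
    and dim0: "nd 0 = n"
    and X: "X \<subseteq> Vec n"
    and layers: "\<forall>r\<in>{1..k}. \<forall>x\<in>Vec (nd (r - 1)). p r x \<in> Vec (nd r)"
    and i: "1 \<le> i" "i \<le> k"
    and gamma_pos: "\<forall>\<epsilon>>0. \<gamma> \<epsilon> > 0"
    and expl: "explainable_rep X (nrm (nd i)) (layer_comp p i) g (layer_comp p k) \<gamma>"
    and j: "1 \<le> j" "j \<le> i"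
    and lip: "\<forall>r\<in>{j+1..i}. l r > 0 \<and>
               lipschitz_wrt (Vec (nd (r - 1))) (nrm (nd (r - 1))) (nrm (nd r)) (l r) (p r)"
  shows "explainable_rep X (nrm (nd j)) (layer_comp p j) g (layer_comp p k)
           (\<lambda>\<epsilon>. \<gamma> (\<epsilon> * (\<Prod>r\<in>{j+1..i}. l r)))"
proof -
  have inV: "layer_comp p m x \<in> Vec (nd m)" if "x \<in> X" "m \<le> k" for x m
    using that
  proof (induction m)
    case 0 then show ?case using X dim0 by auto
  next
    case (Suc m)
    then have "layer_comp p m x \<in> Vec (nd m)" by auto
    then show ?case using layers Suc.prems by auto
  qed
  have chain: "nrm (nd (j+d)) (\<lambda>t. layer_comp p (j+d) x1 t - layer_comp p (j+d) x2 t)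
      \<le> (\<Prod>r\<in>{j+1..j+d}. l r) * nrm (nd j) (\<lambda>t. layer_comp p j x1 t - layer_comp p j x2 t)"
    if "x1 \<in> X" "x2 \<in> X" "j + d \<le> i" for x1 x2 d
    using that(3)
  proof (induction d)
    case 0 then show ?case by simp
  next
    case (Suc d)
    define r where "r = Suc (j+d)"
    have r: "r \<in> {j+1..i}" using Suc.prems r_def by auto
    have rm: "r - 1 = j + d" using r_def by simp
    have L: "l r > 0" "lipschitz_wrt (Vec (nd (j + d))) (nrm (nd (j+d))) (nrm (nd r)) (l r) (p r)"
      using bspec[OF lip r] rm by metis+
    have a: "layer_comp p (j+d) x1 \<in> Vec (nd (j+d))" "layer_comp p (j+d) x2 \<in> Vec (nd (j+d))"
      using inV that Suc.prems i by auto
    have "nrm (nd (j + Suc d)) (\<lambda>t. layer_comp p (j + Suc d) x1 t - layer_comp p (j + Suc d) x2 t)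
        = nrm (nd r) (\<lambda>t. p r (layer_comp p (j+d) x1) t - p r (layer_comp p (j+d) x2) t)"
      by (simp add: r_def)
    also have "\<dots> \<le> l r * nrm (nd (j+d)) (\<lambda>t. layer_comp p (j+d) x1 t - layer_comp p (j+d) x2 t)"
      using L(2) a unfolding lipschitz_wrt_def by auto
    also have "\<dots> \<le> l r * ((\<Prod>r\<in>{j+1..j+d}. l r) * nrm (nd j) (\<lambda>t. layer_comp p j x1 t - layer_comp p j x2 t))"
      using Suc L(1) by (intro mult_left_mono) auto
    also have "\<dots> = (\<Prod>r\<in>{j+1..j + Suc d}. l r) * nrm (nd j) (\<lambda>t. layer_comp p j x1 t - layer_comp p j x2 t)"
      by (simp add: r_def prod.nat_ivl_Suc')
    finally show ?case .
  qed
  have ppos: "(\<Prod>r\<in>{j+1..i}. l r) > 0"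
    using lip by (intro prod_pos) auto
  show ?thesis
    unfolding explainable_rep_def
  proof (intro allI impI ballI)
    fix \<epsilon> :: real and x1 x2
    assume e: "\<epsilon> > 0" and x: "x1 \<in> X" "x2 \<in> X"
      and h: "nrm (nd j) (\<lambda>t. layer_comp p j x1 t - layer_comp p j x2 t) \<le> \<epsilon>"
    have c: "nrm (nd (j+(i-j))) (\<lambda>t. layer_comp p (j+(i-j)) x1 t - layer_comp p (j+(i-j)) x2 t)
      \<le> (\<Prod>r\<in>{j+1..j+(i-j)}. l r) * nrm (nd j) (\<lambda>t. layer_comp p j x1 t - layer_comp p j x2 t)"
      using chain[OF x, of "i-j"] j by simp
    have "nrm (nd i) (\<lambda>t. layer_comp p i x1 t - layer_comp p i x2 t) \<le> \<epsilon> * (\<Prod>r\<in>{j+1..i}. l r)"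
    proof -
      have "(\<Prod>r\<in>{j+1..i}. l r) * nrm (nd j) (\<lambda>t. layer_comp p j x1 t - layer_comp p j x2 t)
          \<le> (\<Prod>r\<in>{j+1..i}. l r) * \<epsilon>" using h ppos by (intro mult_left_mono) auto
      then show ?thesis using c j by (simp add: mult.commute)
    qed
    moreover have "\<epsilon> * (\<Prod>r\<in>{j+1..i}. l r) > 0" using e ppos by simp
    ultimately show "dist (g x1 (layer_comp p k x1)) (g x2 (layer_comp p k x2))
        \<le> \<gamma> (\<epsilon> * (\<Prod>r\<in>{j+1..i}. l r))"
      using expl x unfolding explainable_rep_def by blast
  qed
qed

end
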